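(* Let $N\ge 1$, let $q\in\mathbb{C}$ with $[k]_q\neq 0$ for all $k\ge1$, and set $g(k)=[k]_q$ for $k\ge 1$ (so $g(1)=1$, $g(2)=1+q$). Let $u^0:\mathbb{Z}^N\times[0,\infty)\to\mathbb{C}$ be differentiable in $t$ and satisfy, for all $(x_N,\dots,x_1)\in\mathbb{Z}^N$ and $t\ge 0$, $$\frac{d}{dt}u^0(x_N,\dots,x_1;t)=\sum_{i=1}^N u^0(x_N,\dots,x_{i+1},x_i-1,x_{i-1},\dots,x_1;t)-N\,u^0(x_N,\dots,x_1;t),$$ and, for every $2\le i\le N$ and all integer arguments, $$u^0(\dots,x_{i+1},x_i,x_i-1,x_{i-2},\dots;t)=q\,u^0(\dots,x_{i+1},x_i-1,x_i,x_{i-2},\dots;t)-(q-1)\,u^0(\dots,x_{i+1},x_i,x_i,x_{i-2},\dots;t).$$ Define, for $X\in\mathbf{S}$, $u(X;t)=u^0(X;t)\big/\prod_{\mathbf{x}\in\Lambda(X)}\prod_{k=1}^{\eta_X(\mathbf{x})}g(k)$. Let $X\in\mathbf{S}$ be such that, for some $K\ge0$, $n\ge1$ with $K+n\le N$, $x_{K+1}=\cdots=x_{K+n}=x$ and every site of $\Lambda(X)$ other than $x$ is occupied by exactly one particle. Then $$\frac{d}{dt}u(X;t)=\sum_{\mathbf{x}\in\Lambda(X)} g\big(\eta_{X^{\mathbf{x}}}(\mathbf{x}-1)\big)\,u(X^{\mathbf{x}};t)-\Big(\sum_{\mathbf{x}\in\Lambda(X)}g(\eta_X(\mathbf{x}))\Big)u(X;t),$$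 i.e. $u$ satisfies at $X$ the master equation of the totally asymmetric zero range process with jump rates $g$.
   Context: $[k]_q:=1+q+\cdots+q^{k-1}$. $\mathbf{S}=\{(x_N,\dots,x_1)\in\mathbb{Z}^N: x_N\le x_{N-1}\le\cdots\le x_1\}$ is the set of configurations of $N$ indistinguishable particles on $\mathbb{Z}$ ($x_j$ = position of the $j$-th right-most particle). For $X\in\mathbf{S}$, $\Lambda(X)$ is the set of occupied sites and $\eta_X(\mathbf{x})$ is the number of particles of $X$ at site $\mathbf{x}$. For $\mathbf{x}\in\Lambda(X)$, $X^{\mathbf{x}}\in\mathbf{S}$ denotes the configuration obtained from $X$ by moving one particle from site $\mathbf{x}$ to site $\mathbf{x}-1$. (In the totally asymmetric zero range process with rates $g$, a site occupied by $k$ particles emits one particle to the right neighbour at rate $g(k)$.) *)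

theory Defs
  imports Complex_Main
begin

text \<open>Configurations of N particles are represented as integer lists
  xs = [x_1, x_2, ..., x_N] (so x_j = xs ! (j-1)); membership in S means
  x_N \<le> ... \<le> x_1, i.e. the list is non-increasing.\<close>

definition in_S :: "nat \<Rightarrow> int list \<Rightarrow> bool" where
  "in_S N xs \<longleftrightarrow> length xs = N \<and> sorted (rev xs)"

definition qint :: "complex \<Rightarrow> nat \<Rightarrow> complex" where
  "qint q k = (\<Sum>i<k. q ^ i)"

definition sites :: "int list \<Rightarrow> int set" where
  "sites xs = set xs"

definition eta :: "int list \<Rightarrow> int \<Rightarrow> nat" where
  "eta xs y = count_list xs y"

text \<open>X^y: move one particle from site y to site y-1; the result is the
  element of S with the corresponding multiset of positions.\<close>
definition move :: "int list \<Rightarrow> int \<Rightarrow> int list" where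
  "move xs y = rev (insort (y - 1) (remove1 y (rev xs)))"

definition u_of :: "complex \<Rightarrow> (int list \<Rightarrow> real \<Rightarrow> complex) \<Rightarrow> int list \<Rightarrow> real \<Rightarrow> complex" where
  "u_of q u0 xs t = u0 xs t / (\<Prod>y\<in>sites xs. \<Prod>k\<in>{1..eta xs y}. qint q k)"

end

theory Submission
  imports Defs "HOL-Library.Multiset"
begin

definition dsc :: "int list \<Rightarrow> bool" where
  "dsc X \<longleftrightarrow> (\<forall>i j. i < j \<and> j < length X \<longrightarrow> X ! j \<le> X ! i)"

lemma dsc_iff: "dsc X \<longleftrightarrow> sorted (rev X)"
  unfolding dsc_def using sorted_wrt_rev[of "(\<le>)" X] sorted_wrt_iff_nth_less[of _ X] by auto

lemma in_S_dsc: "in_S N X \<Longrightarrow> dsc X"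
  unfolding in_S_def dsc_iff by simp

lemma mset_move: "mset (move X y) = add_mset (y - 1) (mset X - {#y#})"
  unfolding move_def by simp

lemma move_eq:
  assumes d: "dsc X" and i: "i < length X" and y: "X ! i = y"
    and last: "Suc i < length X \<Longrightarrow> X ! Suc i < y"
  shows "move X y = X[i := y - 1]"
proof -
  let ?ys = "rev (X[i := y - 1])"
  let ?xs = "insort (y - 1) (remove1 y (rev X))"
  have ms: "mset ?ys = mset ?xs"
    using i y by (simp add: mset_update)
  have "sorted_wrt (\<lambda>a b. b \<le> a) (X[i := y - 1])"
    unfolding sorted_wrt_iff_nth_less
  proof (intro allI impI)
    fix a b assume ab: "a < b" "b < length (X[i := y - 1])"
    show "X[i := y - 1] ! b \<le> X[i := y - 1] ! a"
    proof (cases "a = i")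
      case True
      then have "b \<noteq> i" using ab by simp
      moreover have "X ! b \<le> X ! Suc i" if "Suc i < b"
        using d that ab unfolding dsc_def by auto
      moreover have "X ! Suc i < y" using last ab True by simp
      ultimately show ?thesis using True ab
        by (cases "b = Suc i") auto
    next
      case False
      have "X ! b \<le> X ! a" using d ab unfolding dsc_def by auto
      moreover have "X ! i \<le> X ! a" if "b = i" using d ab that unfolding dsc_def by auto
      ultimately show ?thesis using False ab y by (cases "b = i") auto
    qed
  qed
  then have s: "sorted ?ys"
    unfolding sorted_wrt_rev by simp
  have sx: "sorted ?xs"
    using d unfolding dsc_iff by (simp add: sorted_insort sorted_remove1)
  have "sort ?xs = ?ys" using properties_for_sort[OF ms s] .
  then have "?xs = ?ys" using sorted_sort_id[OF sx] by simp
  then show ?thesis unfolding move_def by (metis rev_rev_ident)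
qed

lemma block:
  assumes d: "dsc X" and y: "y \<in> set X"
  shows "\<exists>a. {i. i < length X \<and> X ! i = y} = {a..<a + count_list X y} \<and> count_list X y \<ge> 1"
proof -
  define I where "I = {i. i < length X \<and> X ! i = y}"
  have cI: "card I = count_list X y"
    unfolding I_def count_list_eq_length_filter length_filter_conv_card by metis
  have fI: "finite I" unfolding I_def by simp
  have neI: "I \<noteq> {}" using y unfolding I_def by (auto simp: in_set_conv_nth)
  define a where "a = Min I"
  define b where "b = Max I"
  have aI: "a \<in> I" and bI: "b \<in> I" using fI neI a_def b_def by auto
  have "I \<subseteq> {a..b}" using fI a_def b_def by auto
  moreover have "{a..b} \<subseteq> I"
  proof
    fix j assume j: "j \<in> {a..b}"
    have jl: "j < length X" using j bI unfolding I_def by auto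
    have "X ! j \<le> X ! a"
    proof (cases "a = j")
      case False then have "a < j" using j by auto
      then show ?thesis using d jl unfolding dsc_def by blast
    qed simp
    moreover have "X ! b \<le> X ! j"
    proof (cases "b = j")
      case False then have "j < b" using j by auto
      then show ?thesis using d bI unfolding dsc_def I_def by blast
    qed simp
    ultimately show "j \<in> I" using aI bI j unfolding I_def by auto
  qed
  ultimately have Iab: "I = {a..b}" by auto
  have "a \<le> b" using aI bI fI a_def b_def by auto
  then have "{a..b} = {a..<a + card I}" using Iab by auto
  have "card I > 0" using fI neI by (simp add: card_gt_0_iff)
  then have "count_list X y \<ge> 1" using cI by simp
  then show ?thesis using Iab cI I_def \<open>{a..b} = {a..<a + card I}\<close> by auto
qed

lemma geom:
  fixes f :: "nat \<Rightarrow> complex"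
  shows "(\<forall>j. a \<le> j \<and> j < a + m \<longrightarrow> f j = q * f (Suc j)) \<Longrightarrow>
    (\<Sum>j\<in>{a..<a + Suc m}. f j) = (\<Sum>k<Suc m. q ^ k) * f (a + m)"
proof (induction m)
  case 0 then show ?case by simp
next
  case (Suc m)
  have IH: "(\<Sum>j\<in>{a..<a + Suc m}. f j) = (\<Sum>k<Suc m. q ^ k) * f (a + m)"
    using Suc by auto
  have e: "f (a + m) = q * f (a + Suc m)" using Suc.prems by auto
  have "(\<Sum>j\<in>{a..<a + Suc (Suc m)}. f j) = (\<Sum>j\<in>{a..<a + Suc m}. f j) + f (a + Suc m)"
    by simp
  also have "\<dots> = ((\<Sum>k<Suc m. q ^ k) * q + 1) * f (a + Suc m)"
    unfolding IH e by (simp add: algebra_simps)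
  also have "(\<Sum>k<Suc m. q ^ k) * q + 1 = (\<Sum>k<Suc (Suc m). q ^ k)"
    by (subst (2) sum.lessThan_Suc_shift) (simp add: sum_distrib_left algebra_simps)
  finally show ?case .
qed

definition FF :: "complex \<Rightarrow> nat \<Rightarrow> complex" where
  "FF q n = (\<Prod>k\<in>{1..n}. qint q k)"

definition DD :: "complex \<Rightarrow> int list \<Rightarrow> complex" where
  "DD q xs = (\<Prod>y\<in>set xs. FF q (count_list xs y))"

lemma u_of_DD: "u_of q u0 xs t = u0 xs t / DD q xs"
  unfolding u_of_def DD_def FF_def sites_def eta_def by simp

lemma FF_Suc: "FF q (Suc n) = FF q n * qint q (Suc n)"
  unfolding FF_def by simp

lemma FF_0: "FF q 0 = 1" unfolding FF_def by simp

lemma FF_nz: "\<forall>k\<ge>1. qint q k \<noteq> 0 \<Longrightarrow> FF q n \<noteq> 0"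
  unfolding FF_def by (auto simp: prod_zero_iff)

lemma DD_nz: "\<forall>k\<ge>1. qint q k \<noteq> 0 \<Longrightarrow> DD q xs \<noteq> 0"
  unfolding DD_def using FF_nz by (auto simp: prod_zero_iff)

lemma DD_super: "set xs \<subseteq> S \<Longrightarrow> finite S \<Longrightarrow> DD q xs = (\<Prod>y\<in>S. FF q (count_list xs y))"
  unfolding DD_def by (rule prod.mono_neutral_left) (auto simp: FF_0)

lemma count_move: "count_list (move X y) z =
    count_list X z - (if z = y then 1 else 0) + (if z = y - 1 then 1 else 0)"
  using mset_move[of X y] count_mset[of "move X y" z] count_mset[of X z]
  by (auto simp: count_diff)

lemma DD_move:
  assumes y: "y \<in> set X"
  shows "DD q (move X y) * qint q (count_list X y) = DD q X * qint q (count_list (move X y) (y - 1))"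
proof -
  define S where "S = insert (y - 1) (set X)"
  have fS: "finite S" unfolding S_def by simp
  have sm: "set (move X y) \<subseteq> S"
  proof
    fix z assume "z \<in> set (move X y)"
    then have "count_list (move X y) z \<noteq> 0" by (simp add: count_list_0_iff)
    then have "z = y - 1 \<or> count_list X z \<noteq> 0" by (auto simp: count_move split: if_splits)
    then show "z \<in> S" unfolding S_def by (auto simp: count_list_0_iff)
  qed
  have yS: "y \<in> S" and y1S: "y - 1 \<in> S - {y}" using y unfolding S_def by auto
  define c where "c = count_list X"
  define c' where "c' = count_list (move X y)"
  have cy: "c y \<ge> 1" using y unfolding c_def by (metis count_list_0_iff less_one not_le)
  have c'y: "c' y = c y - 1" and c'y1: "c' (y - 1) = c (y - 1) + 1"
    and c'o: "\<And>z. z \<in> S - {y} - {y - 1} \<Longrightarrow> c' z = c z"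
    unfolding c_def c'_def by (auto simp: count_move)
  define P where "P = (\<Prod>z\<in>S - {y} - {y - 1}. FF q (c z))"
  have P': "(\<Prod>z\<in>S - {y} - {y - 1}. FF q (c' z)) = P"
    unfolding P_def using c'o by (intro prod.cong) auto
  have split: "\<And>g. (\<Prod>z\<in>S. g z) = g y * (g (y - 1) * (\<Prod>z\<in>S - {y} - {y - 1}. g z))"
    using yS y1S fS by (metis finite_Diff prod.remove)
  have DX: "DD q X = FF q (c y) * (FF q (c (y - 1)) * P)"
    using DD_super[of X S q] fS split[of "\<lambda>z. FF q (c z)"] unfolding S_def c_def P_def by auto
  have DM: "DD q (move X y) = FF q (c y - 1) * (FF q (c (y - 1) + 1) * P)"
    using DD_super[OF sm fS, of q] split[of "\<lambda>z. FF q (c' z)"] P' c'y c'y1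
    unfolding c'_def by auto
  have e1: "FF q (c y) = FF q (c y - 1) * qint q (c y)"
    using cy FF_Suc[of q "c y - 1"] by simp
  have e2: "FF q (c (y - 1) + 1) = FF q (c (y - 1)) * qint q (c (y - 1) + 1)"
    using FF_Suc[of q "c (y - 1)"] by simp
  show ?thesis
    unfolding DX DM e1 e2 c_def[symmetric] c'_def[symmetric] c'y1 by (simp add: algebra_simps)
qed

theorem proposition1:
  fixes N :: nat and q :: complex and u0 :: "int list \<Rightarrow> real \<Rightarrow> complex"
    and X :: "int list" and t :: real
  assumes N1: "N \<ge> 1"
    and qnz: "\<forall>k\<ge>1. qint q k \<noteq> 0"
    and deriv0: "\<forall>xs s. length xs = N \<and> s \<ge> 0 \<longrightarrow>
        ((\<lambda>r. u0 xs r) has_vector_derivative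
           ((\<Sum>i<N. u0 (xs[i := xs ! i - 1]) s) - of_nat N * u0 xs s)) (at s within {0..})"
    and exch: "\<forall>xs i a s. length xs = N \<and> 1 \<le> i \<and> i < N \<longrightarrow>
        u0 (xs[i := a, i - 1 := a - 1]) s =
          q * u0 (xs[i := a - 1, i - 1 := a]) s - (q - 1) * u0 (xs[i := a, i - 1 := a]) s"
    and XS: "in_S N X"
    and Xshape: "\<exists>K n x. 1 \<le> n \<and> K + n \<le> N \<and> (\<forall>j. K \<le> j \<and> j < K + n \<longrightarrow> X ! j = x)
                   \<and> (\<forall>y\<in>sites X. y \<noteq> x \<longrightarrow> eta X y = 1)"
    and t0: "t \<ge> 0"
  shows "((\<lambda>r. u_of q u0 X r) has_vector_derivative
           ((\<Sum>y\<in>sites X. qint q (eta (move X y) (y - 1)) * u_of q u0 (move X y) t)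
            - (\<Sum>y\<in>sites X. qint q (eta X y)) * u_of q u0 X t)) (at t within {0..})"
proof -
  have lenX: "length X = N" and d: "dsc X" using XS in_S_dsc unfolding in_S_def by auto
  define w where "w = u0 X t"
  define v where "v i = u0 (X[i := X ! i - 1]) t" for i
  define f where "f i = v i - w" for i
  define c where "c = count_list X"
  define D where "D = DD q X"
  have Dnz: "D \<noteq> 0" unfolding D_def using DD_nz[OF qnz] .
  have der: "((\<lambda>r. u0 X r) has_vector_derivative ((\<Sum>i<N. v i) - of_nat N * w)) (at t within {0..})"
    using deriv0 lenX t0 unfolding v_def w_def by auto
  have s1: "(\<Sum>i<N. v i) - of_nat N * w = (\<Sum>i<N. f i)"
    unfolding f_def by (simp add: sum_subtractf)
  have s2: "(\<Sum>i<N. f i) = (\<Sum>y\<in>set X. \<Sum>i\<in>{i. i \<in> {..<N} \<and> X ! i = y}. f i)"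
    by (rule sum.group[symmetric]) (auto simp: lenX[symmetric])
  have s3: "(\<Sum>i\<in>{i. i \<in> {..<N} \<and> X ! i = y}. f i) = qint q (c y) * (u0 (move X y) t - w)"
    if y: "y \<in> set X" for y
  proof -
    obtain a where Ia: "{i. i < length X \<and> X ! i = y} = {a..<a + c y}" and cy: "c y \<ge> 1"
      using block[OF d y] unfolding c_def by blast
    obtain m where m: "c y = Suc m" using cy by (cases "c y") auto
    have mem: "i < N \<and> X ! i = y \<longleftrightarrow> a \<le> i \<and> i < a + Suc m" for i
      using Ia m lenX by (simp add: set_eq_iff) 
    have eqset: "{i. i \<in> {..<N} \<and> X ! i = y} = {a..<a + Suc m}"
      by (intro set_eqI) (simp only: mem_Collect_eq lessThan_iff atLeastLessThan_iff mem)
    have rec: "\<forall>j. a \<le> j \<and> j < a + m \<longrightarrow> f j = q * f (Suc j)"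
    proof (intro allI impI)
      fix j assume j: "a \<le> j \<and> j < a + m"
      have xj: "X ! j = y" "j < N" and xs: "X ! Suc j = y" "Suc j < N"
        using mem[of j] mem[of "Suc j"] j by auto
      have "u0 (X[Suc j := y, Suc j - 1 := y - 1]) t =
          q * u0 (X[Suc j := y - 1, Suc j - 1 := y]) t - (q - 1) * u0 (X[Suc j := y, Suc j - 1 := y]) t"
        using exch[rule_format, of X "Suc j" y t] lenX xs by linarith
      moreover have "X[Suc j := y, Suc j - 1 := y - 1] = X[j := y - 1]"
        using xs(1) by (metis diff_Suc_1 list_update_id)
      moreover have "X[Suc j := y - 1, Suc j - 1 := y] = X[Suc j := y - 1]"
        using xj(1) by (metis diff_Suc_1 list_update_id list_update_swap n_not_Suc_n)
      moreover have "X[Suc j := y, Suc j - 1 := y] = X"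
        using xj(1) xs(1) by (metis diff_Suc_1 list_update_id)
      ultimately have "v j = q * v (Suc j) - (q - 1) * w"
        unfolding v_def w_def using xj xs by simp
      then show "f j = q * f (Suc j)" unfolding f_def by (simp add: algebra_simps)
    qed
    have "(\<Sum>i\<in>{i. i \<in> {..<N} \<and> X ! i = y}. f i) = (\<Sum>k<Suc m. q ^ k) * f (a + m)"
      unfolding eqset by (rule geom[OF rec])
    moreover have "move X y = X[a + m := y - 1]"
    proof (rule move_eq[OF d])
      show "a + m < length X" "X ! (a + m) = y" using mem[of "a + m"] lenX by auto
      assume "Suc (a + m) < length X"
      moreover have "X ! Suc (a + m) \<noteq> y" using mem[of "Suc (a + m)"] calculation lenX by auto
      moreover have "X ! Suc (a + m) \<le> X ! (a + m)" using d calculation(1) unfolding dsc_def by auto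
      ultimately show "X ! Suc (a + m) < y" using mem[of "a + m"] lenX by auto
    qed
    moreover have "X ! (a + m) = y" using mem[of "a + m"] by auto
    ultimately show ?thesis unfolding f_def v_def m qint_def by simp
  qed
  have s4: "qint q (eta (move X y) (y - 1)) * u_of q u0 (move X y) t = qint q (c y) * u0 (move X y) t / D"
    if y: "y \<in> set X" for y
  proof -
    have "DD q (move X y) \<noteq> 0" using DD_nz[OF qnz] .
    then show ?thesis using DD_move[OF y, of q] Dnz unfolding u_of_DD eta_def c_def D_def
      by (simp add: field_simps)
  qed
  have rhs: "(\<Sum>y\<in>sites X. qint q (eta (move X y) (y - 1)) * u_of q u0 (move X y) t)
            - (\<Sum>y\<in>sites X. qint q (eta X y)) * u_of q u0 X t
      = (\<Sum>y\<in>set X. qint q (c y) * (u0 (move X y) t - w)) / D"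
  proof -
    have A: "(\<Sum>y\<in>sites X. qint q (eta (move X y) (y - 1)) * u_of q u0 (move X y) t)
        = (\<Sum>y\<in>set X. qint q (c y) * u0 (move X y) t / D)"
      unfolding sites_def using s4 by (rule sum.cong[OF refl])
    have B: "(\<Sum>y\<in>sites X. qint q (eta X y)) * u_of q u0 X t = (\<Sum>y\<in>set X. qint q (c y) * w / D)"
      unfolding sites_def eta_def c_def u_of_DD w_def D_def by (simp add: sum_distrib_right sum_divide_distrib)
    have C: "(\<Sum>y\<in>set X. qint q (c y) * (u0 (move X y) t - w)) / D
        = (\<Sum>y\<in>set X. qint q (c y) * u0 (move X y) t / D) - (\<Sum>y\<in>set X. qint q (c y) * w / D)"
      by (simp add: right_diff_distrib sum_subtractf diff_divide_distrib sum_divide_distrib)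
    show ?thesis unfolding A B C ..
  qed
  have val: "((\<Sum>i<N. v i) - of_nat N * w) / D = (\<Sum>y\<in>set X. qint q (c y) * (u0 (move X y) t - w)) / D"
    unfolding s1 s2 using s3 by simp
  have "((\<lambda>r. u0 X r / D) has_vector_derivative (((\<Sum>i<N. v i) - of_nat N * w) / D)) (at t within {0..})"
    using der by (rule has_vector_derivative_divide)
  then show ?thesis unfolding rhs val[symmetric] unfolding u_of_DD D_def .
qed

end
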